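(* Let $G=(V,v,E)$ be a directed graph with $V=\{1,\dots,n\}$, target node $v$, edge set $E$, and let $Z$ be a set of ordered node pairs with $Z\cap E=\emptyset$. For $\mathbf{y}\in\{0,1\}^{Z}$ with support $Y$, let $\mathcal{FR}(\mathbf{y})\ge0$ be the expected first return time to $v$ of the PageRank random walk on $(V,E\cup Y)$. Let $\mathcal{Y}$ be a constraint set with $\mathcal{Y}\cap\{0,1\}^{Z}\ne\emptyset$, and consider the problem $\min\{\mathcal{FR}(\mathbf{y}):\mathbf{y}\in\mathcal{Y}\cap\{0,1\}^{Z}\}$. For disjoint $S,N\subseteq Z$ let $\gamma(S,N)=\min\{\mathcal{FR}(\mathbf{y}): y_e=1\ \forall e\in S,\ y_e=0\ \forall e\in N,\ \mathbf{y}\in\{0,1\}^{Z}\}$. For $\bar{\mathbf{y}}\in\mathcal{Y}\cap\{0,1\}^{Z}$ with support $\bar Y$ define the cut $\mathrm{C}_1(\bar{\mathbf{y}})$: $\theta\ge\mathcal{FR}(\bar{\mathbf{y}})+\sum_{e\in\bar Y}\min\{0,\gamma(\emptyset,\{e\})-\mathcal{FR}(\bar{\mathbf{y}})\}(1-y_e)+\sum_{e\in Z\setminus\bar Y}\min\{0,\gamma(\{e\},\emptyset)-\mathcal{FR}(\bar{\mathbf{y}})\}y_e$, and, for a chosen ordering $e^1,\dots,e^K$ of $Z\setminus\bar Y$, the cut $\mathrm{C}_2(\bar{\mathbf{y}})$: $\theta\ge\mathcal{FR}(\bar{\mathbf{y}})+\sum_{e\in\bar Y}\min\{0,\gamma(\emptyset,\{e\})-\mathcal{FR}(\bar{\mathbf{y}})\}(1-y_e)+\sum_{k=1}^{K}\min\{0,-\mathcal{FR}(\bar{\mathbf{y}})+\gamma(\{e^k\},\{e^{k+1},\dots,e^K\})\}y_{e^k}$.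 Fix one of the two families $\mathrm{C}\in\{\mathrm{C}_1,\mathrm{C}_2\}$ and consider the cutting plane method: start with an empty cut set $\mathcal{C}$; repeatedly solve the relaxed master problem $\min\{\theta:(\theta,\mathbf{y})\text{ satisfies all cuts in }\mathcal{C},\ \mathbf{y}\in\mathcal{Y}\cap\{0,1\}^{Z},\ \theta\in\mathbb{R}_+\}$ to obtain an optimal $(\theta^*,\mathbf{y}^* )$; if $\theta^*\ge\mathcal{FR}(\mathbf{y}^* )$ stop, otherwise add the cut $\mathrm{C}(\mathbf{y}^* )$ to $\mathcal{C}$ and repeat. Then this method terminates after finitely many iterations, and at termination $\mathbf{y}^*$ is an optimal solution of $\min\{\mathcal{FR}(\mathbf{y}):\mathbf{y}\in\mathcal{Y}\cap\{0,1\}^{Z}\}$. Equivalently, this problem has the same optimal value as $\min\{\theta: (\theta,\mathbf{y})\text{ satisfies }\mathrm{C}(\bar{\mathbf{y}})\ \forall\bar{\mathbf{y}}\in\mathcal{Y}\cap\{0,1\}^{Z},\ \mathbf{y}\in\mathcal{Y}\cap\{0,1\}^{Z},\ \theta\in\mathbb{R}_+\}$.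
   Context: The PageRank random walk is the random walk defined by the PageRank (Google) matrix with fixed damping and teleportation, as in Csáji–Jungers–Blondel; the expected first return time to $v$ is the expected number of steps for the walk started at $v$ to return to $v$ (the reciprocal of $v$'s PageRank). *)

theory Defs
  imports Complex_Main
begin

type_synonym edge = "nat \<times> nat"

definition outdeg :: "edge set \<Rightarrow> nat \<Rightarrow> nat" where
  "outdeg A i = card {j. (i, j) \<in> A}"

definition google :: "real \<Rightarrow> (nat \<Rightarrow> real) \<Rightarrow> edge set \<Rightarrow> nat \<Rightarrow> nat \<Rightarrow> real" where
  "google c z A i j =
     c * (if outdeg A i = 0 then z j
          else if (i, j) \<in> A then 1 / real (outdeg A i) else 0)
     + (1 - c) * z j"

definition pagerank :: "nat \<Rightarrow> real \<Rightarrow> (nat \<Rightarrow> real) \<Rightarrow> edge set \<Rightarrow> nat \<Rightarrow> real" where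
  "pagerank n c z A = (THE \<pi>. (\<forall>j. 0 \<le> \<pi> j) \<and> (\<forall>j. j \<notin> {1..n} \<longrightarrow> \<pi> j = 0)
       \<and> (\<Sum>i\<in>{1..n}. \<pi> i) = 1
       \<and> (\<forall>j\<in>{1..n}. (\<Sum>i\<in>{1..n}. \<pi> i * google c z A i j) = \<pi> j))"

text \<open>Expected first return time to v = reciprocal of v's PageRank.\<close>
definition first_return :: "nat \<Rightarrow> real \<Rightarrow> (nat \<Rightarrow> real) \<Rightarrow> nat \<Rightarrow> edge set \<Rightarrow> real" where
  "first_return n c z v A = 1 / pagerank n c z A v"

definition FR :: "nat \<Rightarrow> real \<Rightarrow> (nat \<Rightarrow> real) \<Rightarrow> nat \<Rightarrow> edge set \<Rightarrow> edge set \<Rightarrow> real" where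
  "FR n c z v E Y = first_return n c z v (E \<union> Y)"

text \<open>Binary vectors in {0,1}^Z are represented by their supports Y \<subseteq> Z; y_e = ind Y e.\<close>
definition ind :: "edge set \<Rightarrow> edge \<Rightarrow> real" where
  "ind Y e = (if e \<in> Y then 1 else 0)"

definition gamma :: "(edge set \<Rightarrow> real) \<Rightarrow> edge set \<Rightarrow> edge set \<Rightarrow> edge set \<Rightarrow> real" where
  "gamma fr Z S N = Min (fr ` {Y. Y \<subseteq> Z \<and> S \<subseteq> Y \<and> Y \<inter> N = {}})"

definition cut1 :: "(edge set \<Rightarrow> real) \<Rightarrow> edge set \<Rightarrow> edge set \<Rightarrow> edge set \<Rightarrow> real" where
  "cut1 fr Z Yb Y = fr Yb
     + (\<Sum>e\<in>Yb. min 0 (gamma fr Z {} {e} - fr Yb) * (1 - ind Y e))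
     + (\<Sum>e\<in>Z - Yb. min 0 (gamma fr Z {e} {} - fr Yb) * ind Y e)"

text \<open>Right-hand side of cut C2(ybar) at y, where ord Yb = [e^1,...,e^K] orders Z - Yb.\<close>
definition cut2 :: "(edge set \<Rightarrow> real) \<Rightarrow> edge set \<Rightarrow> (edge set \<Rightarrow> edge list)
                     \<Rightarrow> edge set \<Rightarrow> edge set \<Rightarrow> real" where
  "cut2 fr Z ord Yb Y = fr Yb
     + (\<Sum>e\<in>Yb. min 0 (gamma fr Z {} {e} - fr Yb) * (1 - ind Y e))
     + (\<Sum>k<length (ord Yb). min 0 (- fr Yb + gamma fr Z {ord Yb ! k} (set (drop (Suc k) (ord Yb))))
                              * ind Y (ord Yb ! k))"

text \<open>Relaxed master problem with cut family cut, feasible supports F and cut set C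
  (the points ybar whose cuts have been added).\<close>
definition master_feasible :: "(edge set \<Rightarrow> edge set \<Rightarrow> real) \<Rightarrow> edge set set \<Rightarrow> edge set set
                                \<Rightarrow> real \<Rightarrow> edge set \<Rightarrow> bool" where
  "master_feasible ct F C \<theta> Y \<longleftrightarrow> 0 \<le> \<theta> \<and> Y \<in> F \<and> (\<forall>Yb\<in>C. ct Yb Y \<le> \<theta>)"

definition master_opt :: "(edge set \<Rightarrow> edge set \<Rightarrow> real) \<Rightarrow> edge set set \<Rightarrow> edge set set
                           \<Rightarrow> real \<Rightarrow> edge set \<Rightarrow> bool" where
  "master_opt ct F C \<theta> Y \<longleftrightarrow> master_feasible ct F C \<theta> Y
     \<and> (\<forall>\<theta>' Y'. master_feasible ct F C \<theta>' Y' \<longrightarrow> \<theta> \<le> \<theta>')"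

end

theory Submission imports Defs begin

primrec wv :: "nat \<Rightarrow> (nat \<Rightarrow> nat \<Rightarrow> real) \<Rightarrow> (nat \<Rightarrow> real) \<Rightarrow> nat \<Rightarrow> nat \<Rightarrow> real" where
  "wv n P z 0 = z"
| "wv n P z (Suc k) = (\<lambda>j. \<Sum>i\<in>{1..n}. wv n P z k i * P i j)"

definition statp :: "nat \<Rightarrow> real \<Rightarrow> (nat \<Rightarrow> nat \<Rightarrow> real) \<Rightarrow> (nat \<Rightarrow> real) \<Rightarrow> (nat \<Rightarrow> real) \<Rightarrow> bool" where
  "statp n c P z \<pi> \<longleftrightarrow> (\<forall>j. 0 \<le> \<pi> j) \<and> (\<forall>j. j \<notin> {1..n} \<longrightarrow> \<pi> j = 0)
       \<and> (\<Sum>i\<in>{1..n}. \<pi> i) = 1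
       \<and> (\<forall>j\<in>{1..n}. (\<Sum>i\<in>{1..n}. \<pi> i * (c * P i j + (1 - c) * z j)) = \<pi> j)"

lemma stat_exists:
  fixes P :: "nat \<Rightarrow> nat \<Rightarrow> real" and z :: "nat \<Rightarrow> real" and c :: real
  assumes c: "0 < c" "c < 1"
    and Pnn: "\<forall>i\<in>{1..n}. \<forall>j\<in>{1..n}. 0 \<le> P i j"
    and Prow: "\<forall>i\<in>{1..n}. (\<Sum>j\<in>{1..n}. P i j) = 1"
    and znn: "\<forall>j\<in>{1..n}. 0 \<le> z j" and zs: "(\<Sum>j\<in>{1..n}. z j) = 1"
  shows "\<exists>\<pi>. statp n c P z \<pi>"
proof -
  let ?V = "{1..n}"
  define w where "w = wv n P z"
  have w0: "w 0 = z" and wS: "\<And>k. w (Suc k) = (\<lambda>j. \<Sum>i\<in>?V. w k i * P i j)"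
    by (simp_all add: w_def)
  have wnn: "\<forall>j\<in>?V. 0 \<le> w k j" for k
    by (induction k) (auto simp: w0 wS znn Pnn intro!: sum_nonneg)
  have wsum: "(\<Sum>j\<in>?V. w k j) = 1" for k
  proof (induction k)
    case 0 show ?case using zs by (simp add: w0)
  next
    case (Suc k)
    have "(\<Sum>j\<in>?V. w (Suc k) j) = (\<Sum>j\<in>?V. \<Sum>i\<in>?V. w k i * P i j)" by (simp add: wS)
    also have "\<dots> = (\<Sum>i\<in>?V. \<Sum>j\<in>?V. w k i * P i j)" by (rule sum.swap)
    also have "\<dots> = (\<Sum>i\<in>?V. w k i * (\<Sum>j\<in>?V. P i j))" by (simp add: sum_distrib_left)
    also have "\<dots> = (\<Sum>i\<in>?V. w k i)" using Prow by simp
    finally show ?case using Suc by simp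
  qed
  have wle: "w k j \<le> 1" if "j \<in> ?V" for k j
  proof -
    have "w k j \<le> (\<Sum>j\<in>?V. w k j)"
      by (rule member_le_sum) (use that wnn in auto)
    then show ?thesis using wsum by simp
  qed
  have summ: "summable (\<lambda>k. c^k * w k j)" if "j \<in> ?V" for j
  proof (rule summable_comparison_test[of _ "\<lambda>k. c^k"])
    show "\<exists>N. \<forall>k\<ge>N. norm (c^k * w k j) \<le> c^k"
      using wnn wle that c by (auto simp: abs_mult intro!: mult_left_le)
    show "summable (\<lambda>k. c^k)" using c by (intro summable_geometric) auto
  qed
  define s where "s j = (\<Sum>k. c^k * w k j)" for j
  have sums: "(\<lambda>k. c^k * w k j) sums s j" if "j \<in> ?V" for j
    using summ[OF that] s_def by (simp add: summable_sums)
  have snn: "0 \<le> s j" if "j \<in> ?V" for j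
    unfolding s_def using summ[OF that] wnn that c by (intro suminf_nonneg) auto
  define \<pi> where "\<pi> j = (if j \<in> ?V then (1 - c) * s j else 0)" for j
  have ssum: "(\<Sum>j\<in>?V. s j) = 1 / (1 - c)"
  proof -
    have "(\<lambda>k. \<Sum>j\<in>?V. c^k * w k j) sums (\<Sum>j\<in>?V. s j)"
      by (rule sums_sum) (rule sums)
    moreover have "(\<lambda>k. \<Sum>j\<in>?V. c^k * w k j) = (\<lambda>k. c^k)"
    proof
      fix k
      have "(\<Sum>j\<in>?V. c^k * w k j) = c^k * (\<Sum>j\<in>?V. w k j)" by (rule sum_distrib_left[symmetric])
      then show "(\<Sum>j\<in>?V. c^k * w k j) = c^k" using wsum[of k] by simp
    qed
    ultimately have "(\<lambda>k. c^k) sums (\<Sum>j\<in>?V. s j)" by simp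
    moreover have "(\<lambda>k. c^k) sums (1 / (1 - c))" using c by (intro geometric_sums) auto
    ultimately show ?thesis using sums_unique2 by blast
  qed
  have sstat: "s j = c * (\<Sum>i\<in>?V. s i * P i j) + z j" if j: "j \<in> ?V" for j
  proof -
    have "(\<lambda>k. \<Sum>i\<in>?V. c^k * w k i * P i j) sums (\<Sum>i\<in>?V. s i * P i j)"
      by (rule sums_sum) (rule sums_mult2, rule sums)
    moreover have "(\<lambda>k. \<Sum>i\<in>?V. c^k * w k i * P i j) = (\<lambda>k. c^k * w (Suc k) j)"
      by (simp add: wS sum_distrib_left mult.assoc)
    ultimately have "(\<lambda>k. c^k * w (Suc k) j) sums (\<Sum>i\<in>?V. s i * P i j)" by simp
    then have "(\<lambda>k. c * (c^k * w (Suc k) j)) sums (c * (\<Sum>i\<in>?V. s i * P i j))"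
      by (rule sums_mult)
    then have "(\<lambda>k. c^(Suc k) * w (Suc k) j) sums (c * (\<Sum>i\<in>?V. s i * P i j))"
      by (simp add: mult.assoc)
    then have "(\<lambda>k. c^k * w k j) sums (c * (\<Sum>i\<in>?V. s i * P i j) + c^0 * w 0 j)"
      by (subst (asm) sums_Suc_iff[where f="\<lambda>k. c^k * w k j"]) 
    then show ?thesis using sums[OF j] sums_unique2 w0 by fastforce
  qed
  have "statp n c P z \<pi>"
    unfolding statp_def
  proof (intro conjI allI impI ballI)
    show "0 \<le> \<pi> j" for j using snn c by (auto simp: \<pi>_def)
    show "\<pi> j = 0" if "j \<notin> ?V" for j using that unfolding \<pi>_def by auto
    have "(\<Sum>i\<in>?V. \<pi> i) = (\<Sum>i\<in>?V. (1 - c) * s i)" by (simp add: \<pi>_def)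
    also have "\<dots> = 1" using ssum c by (simp add: sum_distrib_left[symmetric])
    finally show "(\<Sum>i\<in>?V. \<pi> i) = 1" .
    fix j assume j: "j \<in> ?V"
    have "(\<Sum>i\<in>?V. \<pi> i * (c * P i j + (1 - c) * z j))
        = (1 - c) * (c * (\<Sum>i\<in>?V. s i * P i j) + (1 - c) * z j * (\<Sum>i\<in>?V. s i))"
    proof -
      have "(\<Sum>i\<in>?V. \<pi> i * (c * P i j + (1 - c) * z j))
          = (\<Sum>i\<in>?V. (1 - c) * (c * (s i * P i j)) + (1 - c) * ((1 - c) * z j * s i))"
        by (rule sum.cong) (auto simp: \<pi>_def algebra_simps)
      also have "\<dots> = (1 - c) * (c * (\<Sum>i\<in>?V. s i * P i j)) + (1 - c) * ((1 - c) * z j * (\<Sum>i\<in>?V. s i))"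
        by (simp add: sum.distrib sum_distrib_left)
      finally show ?thesis by (simp add: algebra_simps)
    qed
    also have "\<dots> = (1 - c) * (c * (\<Sum>i\<in>?V. s i * P i j) + z j)" using ssum c by simp
    also have "\<dots> = \<pi> j" using sstat[OF j] j by (simp add: \<pi>_def)
    finally show "(\<Sum>i\<in>?V. \<pi> i * (c * P i j + (1 - c) * z j)) = \<pi> j" .
  qed
  then show ?thesis by blast
qed

lemma stat_unique:
  fixes P :: "nat \<Rightarrow> nat \<Rightarrow> real" and z :: "nat \<Rightarrow> real" and c :: real
  assumes c: "0 < c" "c < 1"
    and Pnn: "\<forall>i\<in>{1..n}. \<forall>j\<in>{1..n}. 0 \<le> P i j"
    and Prow: "\<forall>i\<in>{1..n}. (\<Sum>j\<in>{1..n}. P i j) = 1"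
    and p1: "statp n c P z p1" and p2: "statp n c P z p2"
  shows "p1 = p2"
proof -
  let ?V = "{1..n}"
  define d where "d i = p1 i - p2 i" for i
  have eq: "p j = c * (\<Sum>i\<in>?V. p i * P i j) + (1 - c) * z j"
    if "statp n c P z p" "j \<in> ?V" for p j
  proof -
    have "p j = (\<Sum>i\<in>?V. p i * (c * P i j + (1 - c) * z j))" using that by (simp add: statp_def)
    also have "\<dots> = (\<Sum>i\<in>?V. c * (p i * P i j) + (1 - c) * z j * p i)"
      by (rule sum.cong) (auto simp: algebra_simps)
    also have "\<dots> = c * (\<Sum>i\<in>?V. p i * P i j) + (1 - c) * z j * (\<Sum>i\<in>?V. p i)"
      by (simp add: sum.distrib sum_distrib_left)
    finally show ?thesis using that by (simp add: statp_def)
  qed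
  have deq: "d j = c * (\<Sum>i\<in>?V. d i * P i j)" if "j \<in> ?V" for j
    using eq[OF p1 that] eq[OF p2 that] by (simp add: d_def sum_subtractf algebra_simps)
  have "(\<Sum>j\<in>?V. \<bar>d j\<bar>) \<le> (\<Sum>j\<in>?V. c * (\<Sum>i\<in>?V. \<bar>d i\<bar> * P i j))"
  proof (rule sum_mono)
    fix j assume j: "j \<in> ?V"
    have "\<bar>d j\<bar> = c * \<bar>\<Sum>i\<in>?V. d i * P i j\<bar>" using deq[OF j] c by (simp add: abs_mult)
    also have "\<dots> \<le> c * (\<Sum>i\<in>?V. \<bar>d i * P i j\<bar>)" using c by (intro mult_left_mono sum_abs) auto
    also have "\<dots> = c * (\<Sum>i\<in>?V. \<bar>d i\<bar> * P i j)" using Pnn j by (simp add: abs_mult)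
    finally show "\<bar>d j\<bar> \<le> c * (\<Sum>i\<in>?V. \<bar>d i\<bar> * P i j)" .
  qed
  also have "\<dots> = c * (\<Sum>j\<in>?V. \<Sum>i\<in>?V. \<bar>d i\<bar> * P i j)"
    by (simp add: sum_distrib_left)
  also have "\<dots> = c * (\<Sum>i\<in>?V. \<Sum>j\<in>?V. \<bar>d i\<bar> * P i j)"
    by (subst sum.swap) (rule refl)
  also have "\<dots> = c * (\<Sum>i\<in>?V. \<bar>d i\<bar>)" using Prow by (simp flip: sum_distrib_left)
  finally have "(1 - c) * (\<Sum>j\<in>?V. \<bar>d j\<bar>) \<le> 0" by (simp add: algebra_simps)
  moreover have "0 \<le> (\<Sum>j\<in>?V. \<bar>d j\<bar>)" by (simp add: sum_nonneg)
  ultimately have "(\<Sum>j\<in>?V. \<bar>d j\<bar>) = 0" using c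
    by (smt (verit) mult_pos_pos)
  then have "\<forall>j\<in>?V. \<bar>d j\<bar> = 0" by (subst (asm) sum_nonneg_eq_0_iff) auto
  then show ?thesis using p1 p2 unfolding statp_def d_def by (auto intro!: ext)
qed

definition PM :: "(nat \<Rightarrow> real) \<Rightarrow> edge set \<Rightarrow> nat \<Rightarrow> nat \<Rightarrow> real" where
  "PM z A i j = (if outdeg A i = 0 then z j
          else if (i, j) \<in> A then 1 / real (outdeg A i) else 0)"

lemma google_PM: "google c z A i j = c * PM z A i j + (1 - c) * z j"
  by (simp add: google_def PM_def)

lemma PM_row:
  assumes A: "A \<subseteq> {1..n} \<times> {1..n}" and zs: "(\<Sum>j\<in>{1..n}. z j) = 1"
  shows "(\<Sum>j\<in>{1..n}. PM z A i j) = 1"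
proof (cases "outdeg A i = 0")
  case True then show ?thesis using zs by (simp add: PM_def)
next
  case False
  have sub: "{j. (i, j) \<in> A} \<subseteq> {1..n}" using A by auto
  have "(\<Sum>j\<in>{1..n}. PM z A i j) = (\<Sum>j\<in>{1..n}. if (i, j) \<in> A then 1 / real (outdeg A i) else 0)"
    using False by (simp add: PM_def)
  also have "\<dots> = (\<Sum>j\<in>{j\<in>{1..n}. (i, j) \<in> A}. 1 / real (outdeg A i))"
    by (rule sum.inter_filter[symmetric]) simp
  also have "{j\<in>{1..n}. (i, j) \<in> A} = {j. (i, j) \<in> A}" using sub by auto
  also have "(\<Sum>j\<in>{j. (i, j) \<in> A}. 1 / real (outdeg A i)) = 1"
    using False by (simp add: outdeg_def)
  finally show ?thesis .
qed

lemma pagerank_nonneg: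
  assumes A: "A \<subseteq> {1..n} \<times> {1..n}" and c: "0 < c" "c < 1"
    and znn: "\<forall>j\<in>{1..n}. 0 < z j" and zs: "(\<Sum>j\<in>{1..n}. z j) = 1"
  shows "0 \<le> pagerank n c z A v"
proof -
  have Pnn: "\<forall>i\<in>{1..n}. \<forall>j\<in>{1..n}. 0 \<le> PM z A i j"
    using znn by (auto simp: PM_def less_imp_le)
  have Prow: "\<forall>i\<in>{1..n}. (\<Sum>j\<in>{1..n}. PM z A i j) = 1" using PM_row[OF A zs] by blast
  have znn': "\<forall>j\<in>{1..n}. 0 \<le> z j" using znn by (auto simp: less_imp_le)
  have ex: "\<exists>!\<pi>. statp n c (PM z A) z \<pi>"
    using stat_exists[OF c Pnn Prow znn' zs] stat_unique[OF c Pnn Prow] by blast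
  have eq: "pagerank n c z A = (THE \<pi>. statp n c (PM z A) z \<pi>)"
    unfolding pagerank_def statp_def google_PM ..
  have "statp n c (PM z A) z (pagerank n c z A)"
    unfolding eq by (rule theI'[OF ex])
  then show ?thesis by (simp add: statp_def)
qed

lemma gamma_le:
  assumes "finite Z" "Y \<subseteq> Z" "S \<subseteq> Y" "Y \<inter> N = {}"
  shows "gamma fr Z S N \<le> fr Y"
  unfolding gamma_def
proof (rule Min_le)
  have "{Y. Y \<subseteq> Z \<and> S \<subseteq> Y \<and> Y \<inter> N = {}} \<subseteq> Pow Z" by auto
  then show "finite (fr ` {Y. Y \<subseteq> Z \<and> S \<subseteq> Y \<and> Y \<inter> N = {}})"
    using assms(1) by (meson finite_Pow_iff finite_imageI finite_subset)
  show "fr Y \<in> fr ` {Y. Y \<subseteq> Z \<and> S \<subseteq> Y \<and> Y \<inter> N = {}}" using assms by auto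
qed

lemma sum_le_term:
  fixes f :: "'a \<Rightarrow> real"
  assumes "finite A" "e \<in> A" "\<forall>x\<in>A. f x \<le> 0"
  shows "sum f A \<le> f e"
proof -
  have "sum f A = f e + sum f (A - {e})" using assms by (simp add: sum.remove)
  moreover have "sum f (A - {e}) \<le> 0" using assms by (intro sum_nonpos) auto
  ultimately show ?thesis by simp
qed

lemma cut1_self: "cut1 fr Z Y Y = fr Y"
  unfolding cut1_def by (simp add: ind_def)

lemma cut2_self: assumes "set (ord Y) = Z - Y" shows "cut2 fr Z ord Y Y = fr Y"
proof -
  have "\<forall>k<length (ord Y). ind Y (ord Y ! k) = 0"
    using assms nth_mem by (fastforce simp: ind_def)
  then show ?thesis unfolding cut2_def by (simp add: ind_def)
qed

lemma min_ind_nonpos: "min 0 a * ind Y e \<le> (0::real)"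
  by (simp add: ind_def)

lemma min_ind_nonpos2: "min 0 a * (1 - ind Y e) \<le> (0::real)"
  by (simp add: ind_def)

lemma cut1_valid:
  assumes Z: "finite Z" and Yb: "Yb \<subseteq> Z" and Y: "Y \<subseteq> Z"
  shows "cut1 fr Z Yb Y \<le> fr Y"
proof -
  have fYb: "finite Yb" using Z Yb finite_subset by blast
  define T1 where "T1 = (\<Sum>e\<in>Yb. min 0 (gamma fr Z {} {e} - fr Yb) * (1 - ind Y e))"
  define T2 where "T2 = (\<Sum>e\<in>Z - Yb. min 0 (gamma fr Z {e} {} - fr Yb) * ind Y e)"
  have c: "cut1 fr Z Yb Y = fr Yb + T1 + T2" unfolding cut1_def T1_def T2_def ..
  have T1n: "T1 \<le> 0" unfolding T1_def by (intro sum_nonpos) (simp add: min_ind_nonpos2)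
  have T2n: "T2 \<le> 0" unfolding T2_def by (intro sum_nonpos) (simp add: min_ind_nonpos)
  show ?thesis
  proof (cases "Y = Yb")
    case True then show ?thesis by (simp add: cut1_self)
  next
    case False
    then consider e where "e \<in> Yb" "e \<notin> Y" | e where "e \<in> Y" "e \<notin> Yb" by blast
    then show ?thesis
    proof cases
      case (1 e)
      have "T1 \<le> min 0 (gamma fr Z {} {e} - fr Yb) * (1 - ind Y e)"
        unfolding T1_def using fYb 1 by (intro sum_le_term) (auto simp: min_ind_nonpos2)
      also have "\<dots> \<le> gamma fr Z {} {e} - fr Yb" using 1 by (simp add: ind_def)
      also have "\<dots> \<le> fr Y - fr Yb" using gamma_le[OF Z Y, of "{}" "{e}" fr] 1 by auto
      finally show ?thesis using c T2n by simp
    next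
      case (2 e)
      have "T2 \<le> min 0 (gamma fr Z {e} {} - fr Yb) * ind Y e"
        unfolding T2_def using Z 2 Y by (intro sum_le_term) (auto simp: min_ind_nonpos)
      also have "\<dots> \<le> gamma fr Z {e} {} - fr Yb" using 2 by (simp add: ind_def)
      also have "\<dots> \<le> fr Y - fr Yb" using gamma_le[OF Z Y, of "{e}" "{}" fr] 2 by auto
      finally show ?thesis using c T1n by simp
    qed
  qed
qed

lemma cut2_valid:
  assumes Z: "finite Z" and Yb: "Yb \<subseteq> Z" and Y: "Y \<subseteq> Z" and ord: "set (ord Yb) = Z - Yb"
  shows "cut2 fr Z ord Yb Y \<le> fr Y"
proof -
  have fYb: "finite Yb" using Z Yb finite_subset by blast
  define L where "L = ord Yb"
  define T1 where "T1 = (\<Sum>e\<in>Yb. min 0 (gamma fr Z {} {e} - fr Yb) * (1 - ind Y e))"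
  define T2 where "T2 = (\<Sum>k<length L. min 0 (- fr Yb + gamma fr Z {L ! k} (set (drop (Suc k) L)))
                              * ind Y (L ! k))"
  have c: "cut2 fr Z ord Yb Y = fr Yb + T1 + T2" unfolding cut2_def T1_def T2_def L_def ..
  have T1n: "T1 \<le> 0" unfolding T1_def by (intro sum_nonpos) (simp add: min_ind_nonpos2)
  have T2n: "T2 \<le> 0" unfolding T2_def by (intro sum_nonpos) (simp add: min_ind_nonpos)
  show ?thesis
  proof (cases "Y = Yb")
    case True then show ?thesis using ord by (simp add: cut2_self)
  next
    case False
    then consider e where "e \<in> Yb" "e \<notin> Y" | e where "e \<in> Y" "e \<notin> Yb" by blast
    then show ?thesis
    proof cases
      case (1 e)
      have "T1 \<le> min 0 (gamma fr Z {} {e} - fr Yb) * (1 - ind Y e)"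
        unfolding T1_def using fYb 1 by (intro sum_le_term) (auto simp: min_ind_nonpos2)
      also have "\<dots> \<le> gamma fr Z {} {e} - fr Yb" using 1 by (simp add: ind_def)
      also have "\<dots> \<le> fr Y - fr Yb" using gamma_le[OF Z Y, of "{}" "{e}" fr] 1 by auto
      finally show ?thesis using c T2n by simp
    next
      case (2 e)
      define K where "K = {k. k < length L \<and> L ! k \<in> Y}"
      have "e \<in> set L" using 2 Y ord L_def by auto
      then obtain k0 where "k0 < length L" "L ! k0 = e" by (auto simp: in_set_conv_nth)
      then have "k0 \<in> K" using 2 K_def by auto
      have fK: "finite K" unfolding K_def by auto
      define k where "k = Max K"
      have kK: "k \<in> K" using fK \<open>k0 \<in> K\<close> k_def Max_in by blast
      have kmax: "k' \<le> k" if "k' \<in> K" for k' using fK that k_def by simp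
      have disj: "Y \<inter> set (drop (Suc k) L) = {}"
      proof (rule ccontr)
        assume "Y \<inter> set (drop (Suc k) L) \<noteq> {}"
        then obtain x where x: "x \<in> Y" "x \<in> set (drop (Suc k) L)" by blast
        then obtain i where "i < length (drop (Suc k) L)" "drop (Suc k) L ! i = x"
          by (auto simp: in_set_conv_nth)
        then have "Suc k + i < length L" "L ! (Suc k + i) = x" by auto
        then have "Suc k + i \<in> K" using x K_def by auto
        then show False using kmax by fastforce
      qed
      have kl: "k < length L" "L ! k \<in> Y" using kK K_def by auto
      have "T2 \<le> min 0 (- fr Yb + gamma fr Z {L ! k} (set (drop (Suc k) L))) * ind Y (L ! k)"
        unfolding T2_def using kl by (intro sum_le_term) (auto simp: min_ind_nonpos)
      also have "\<dots> \<le> - fr Yb + gamma fr Z {L ! k} (set (drop (Suc k) L))" using kl by (simp add: ind_def)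
      also have "\<dots> \<le> fr Y - fr Yb"
        using gamma_le[OF Z Y, of "{L ! k}" "set (drop (Suc k) L)" fr] kl disj by auto
      finally show ?thesis using c T1n by simp
    qed
  qed
qed

lemma master_exists:
  assumes C: "finite C" and F: "finite F" "F \<noteq> {}"
  shows "\<exists>\<theta> Y. master_opt ct F C \<theta> Y"
proof -
  define h where "h Y = Max (insert 0 ((\<lambda>Yb. ct Yb Y) ` C))" for Y
  have hfeas: "master_feasible ct F C (h Y) Y" if "Y \<in> F" for Y
    unfolding master_feasible_def h_def using that C by auto
  have hle: "h Y \<le> \<theta>" if "master_feasible ct F C \<theta> Y" for \<theta> Y
    using that C unfolding master_feasible_def h_def by auto
  define m where "m = Min (h ` F)"
  have "m \<in> h ` F" unfolding m_def using F by (intro Min_in) auto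
  then obtain Y0 where Y0: "Y0 \<in> F" "h Y0 = m" by auto
  have "master_opt ct F C (h Y0) Y0"
    unfolding master_opt_def
  proof (intro conjI allI impI)
    show "master_feasible ct F C (h Y0) Y0" by (rule hfeas[OF Y0(1)])
    fix \<theta>' Y' assume a: "master_feasible ct F C \<theta>' Y'"
    then have "Y' \<in> F" by (simp add: master_feasible_def)
    then have "m \<le> h Y'" unfolding m_def using F by auto
    then show "h Y0 \<le> \<theta>'" using Y0 hle[OF a] by simp
  qed
  then show ?thesis by blast
qed

lemma main_generic:
  fixes fr :: "edge set \<Rightarrow> real"
  assumes F: "finite F" "F \<noteq> {}"
    and self: "\<forall>Y\<in>F. ct Y Y = fr Y"
    and valid: "\<forall>Yb\<in>F. \<forall>Y\<in>F. ct Yb Y \<le> fr Y"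
    and frnn: "\<forall>Y\<in>F. 0 \<le> fr Y"
  shows
    "(\<forall>(K::nat) \<theta>s Ys. (\<forall>k<K. master_opt ct F (Ys ` {..<k}) (\<theta>s k) (Ys k)
                        \<and> \<theta>s k < fr (Ys k))
        \<longrightarrow> (\<exists>\<theta> Y. master_opt ct F (Ys ` {..<K}) \<theta> Y))
   \<and> \<not> (\<exists>\<theta>s Ys. \<forall>k::nat. master_opt ct F (Ys ` {..<k}) (\<theta>s k) (Ys k)
                     \<and> \<theta>s k < fr (Ys k))
   \<and> (\<forall>(K::nat) \<theta>s Ys. (\<forall>k\<le>K. master_opt ct F (Ys ` {..<k}) (\<theta>s k) (Ys k))
        \<and> (\<forall>k<K. \<theta>s k < fr (Ys k))
        \<and> fr (Ys K) \<le> \<theta>s K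
        \<longrightarrow> (\<forall>Y\<in>F. fr (Ys K) \<le> fr Y))
   \<and> (\<exists>\<theta> Y. master_opt ct F F \<theta> Y)
   \<and> (\<forall>\<theta> Y. master_opt ct F F \<theta> Y \<longrightarrow> \<theta> = Min (fr ` F))"
proof (intro conjI allI impI ballI)
  fix K :: nat and \<theta>s :: "nat \<Rightarrow> real" and Ys :: "nat \<Rightarrow> edge set"
  show "\<exists>\<theta> Y. master_opt ct F (Ys ` {..<K}) \<theta> Y" using master_exists F by blast
next
  show "\<not> (\<exists>\<theta>s Ys. \<forall>k::nat. master_opt ct F (Ys ` {..<k}) (\<theta>s k) (Ys k) \<and> \<theta>s k < fr (Ys k))"
  proof
    assume "\<exists>\<theta>s Ys. \<forall>k::nat. master_opt ct F (Ys ` {..<k}) (\<theta>s k) (Ys k) \<and> \<theta>s k < fr (Ys k)"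
    then obtain \<theta>s Ys where run: "\<forall>k::nat. master_opt ct F (Ys ` {..<k}) (\<theta>s k) (Ys k) \<and> \<theta>s k < fr (Ys k)"
      by blast
    have inF: "Ys k \<in> F" for k using run by (simp add: master_opt_def master_feasible_def)
    have neq: "Ys k \<noteq> Ys k'" if "k < k'" for k k'
    proof
      assume eq: "Ys k = Ys k'"
      have "ct (Ys k) (Ys k') \<le> \<theta>s k'"
        using run[rule_format, of k'] that by (auto simp: master_opt_def master_feasible_def)
      then have "fr (Ys k') \<le> \<theta>s k'" using self inF eq by metis
      then show False using run by (meson not_less)
    qed
    have "inj Ys"
      by (rule injI) (metis neq linorder_neqE_nat)
    moreover have "range Ys \<subseteq> F" using inF by auto
    ultimately have "finite (UNIV :: nat set)"
      using F(1) by (meson finite_imageD finite_subset)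
    then show False by simp
  qed
next
  fix K :: nat and \<theta>s :: "nat \<Rightarrow> real" and Ys :: "nat \<Rightarrow> edge set" and Y
  assume a: "(\<forall>k\<le>K. master_opt ct F (Ys ` {..<k}) (\<theta>s k) (Ys k)) \<and> (\<forall>k<K. \<theta>s k < fr (Ys k))
        \<and> fr (Ys K) \<le> \<theta>s K"
  assume Y: "Y \<in> F"
  have inF: "Ys k \<in> F" if "k \<le> K" for k using a that by (simp add: master_opt_def master_feasible_def)
  have "master_feasible ct F (Ys ` {..<K}) (fr Y) Y"
    unfolding master_feasible_def using Y frnn valid inF by auto
  moreover have "master_opt ct F (Ys ` {..<K}) (\<theta>s K) (Ys K)" using a by simp
  ultimately have "\<theta>s K \<le> fr Y" unfolding master_opt_def by blast
  then show "fr (Ys K) \<le> fr Y" using a by simp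
next
  show "\<exists>\<theta> Y. master_opt ct F F \<theta> Y" using master_exists F by blast
next
  fix \<theta> Y assume opt: "master_opt ct F F \<theta> Y"
  have YF: "Y \<in> F" and ge: "ct Y Y \<le> \<theta>" using opt by (auto simp: master_opt_def master_feasible_def)
  have "Min (fr ` F) \<in> fr ` F" using F by (intro Min_in) auto
  then obtain Y1 where Y1: "Y1 \<in> F" "fr Y1 = Min (fr ` F)" by auto
  have "master_feasible ct F F (fr Y1) Y1"
    unfolding master_feasible_def using Y1(1) frnn valid by auto
  then have "\<theta> \<le> fr Y1" using opt unfolding master_opt_def by blast
  moreover have "Min (fr ` F) \<le> fr Y" using F YF by auto
  ultimately show "\<theta> = Min (fr ` F)" using ge self YF Y1 by auto
qed

theorem proposition3:
  fixes n v :: nat and c :: real and z :: "nat \<Rightarrow> real"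
    and E Z :: "edge set" and F :: "edge set set"
    and ord :: "edge set \<Rightarrow> edge list"
    and ct :: "edge set \<Rightarrow> edge set \<Rightarrow> real"
  assumes "v \<in> {1..n}"
    and "0 < c" and "c < 1"
    and "\<forall>j\<in>{1..n}. 0 < z j" and "(\<Sum>j\<in>{1..n}. z j) = 1"
    and "E \<subseteq> {1..n} \<times> {1..n}" and "Z \<subseteq> {1..n} \<times> {1..n}" and "Z \<inter> E = {}"
    and "F \<subseteq> Pow Z" and "F \<noteq> {}"
    and "\<forall>Yb. distinct (ord Yb) \<and> set (ord Yb) = Z - Yb"
    and "ct = cut1 (FR n c z v E) Z \<or> ct = cut2 (FR n c z v E) Z ord"
  shows
    \<comment> \<open>the relaxed master problem is always solvable along a run\<close>
    "(\<forall>(K::nat) \<theta>s Ys. (\<forall>k<K. master_opt ct F (Ys ` {..<k}) (\<theta>s k) (Ys k)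
                        \<and> \<theta>s k < FR n c z v E (Ys k))
        \<longrightarrow> (\<exists>\<theta> Y. master_opt ct F (Ys ` {..<K}) \<theta> Y))
   \<comment> \<open>no run continues forever (finite termination)\<close>
   \<and> \<not> (\<exists>\<theta>s Ys. \<forall>k::nat. master_opt ct F (Ys ` {..<k}) (\<theta>s k) (Ys k)
                     \<and> \<theta>s k < FR n c z v E (Ys k))
   \<comment> \<open>at termination y* is optimal\<close>
   \<and> (\<forall>(K::nat) \<theta>s Ys. (\<forall>k\<le>K. master_opt ct F (Ys ` {..<k}) (\<theta>s k) (Ys k))
        \<and> (\<forall>k<K. \<theta>s k < FR n c z v E (Ys k))
        \<and> FR n c z v E (Ys K) \<le> \<theta>s K
        \<longrightarrow> (\<forall>Y\<in>F. FR n c z v E (Ys K) \<le> FR n c z v E Y))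
   \<comment> \<open>the full ct reformulation has the same optimal value\<close>
   \<and> (\<exists>\<theta> Y. master_opt ct F F \<theta> Y)
   \<and> (\<forall>\<theta> Y. master_opt ct F F \<theta> Y \<longrightarrow> \<theta> = Min (FR n c z v E ` F))"
proof -
  let ?fr = "FR n c z v E"
  have finZ: "finite Z" using assms(7) by (rule finite_subset) auto
  have finF: "finite F" using assms(9) finZ by (meson finite_Pow_iff finite_subset)
  have frnn: "\<forall>Y\<in>F. 0 \<le> ?fr Y"
  proof
    fix Y assume "Y \<in> F"
    then have "E \<union> Y \<subseteq> {1..n} \<times> {1..n}" using assms(6,7,9) by blast
    then have "0 \<le> pagerank n c z (E \<union> Y) v"
      using pagerank_nonneg assms(2,3,4,5) by blast
    then show "0 \<le> ?fr Y" by (simp add: FR_def first_return_def)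
  qed
  have self: "\<forall>Y\<in>F. ct Y Y = ?fr Y"
    using assms(12,11) cut1_self cut2_self by metis
  have valid: "\<forall>Yb\<in>F. \<forall>Y\<in>F. ct Yb Y \<le> ?fr Y"
    using assms(12,11,9) cut1_valid[OF finZ] cut2_valid[OF finZ] by (metis PowD subsetD)
  show ?thesis
    by (rule main_generic[OF finF assms(10) self valid frnn])
qed

end
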